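(* Let $[n_1,\dots,n_l]$ be a Hirzebruch-Jung continued fraction (integers $n_j\ge 2$), and put $c_i=-[n_i,n_{i-1},\dots,n_1]$ for $i=1,\dots,l$, so that the rational quadratic form of $L=L_{[n_1,\dots,n_l]}$ is equivalent to $\sum_{i=1}^l c_iX_i^2$. Let $\tau(L)=L_{[2,n_1,\dots,n_{l-1},n_l+1]}$. Then $\tau(L)\otimes\mathbb{Q}$ has an orthogonal basis $v_1,\dots,v_{l+1}$ with $v_i^2=d_i$, where $d_i=c_i$ for $i=1,\dots,l-1$, $d_l=c_l-1$, and $$d_{l+1}=-2-\sum_{j=1}^l\frac{d_j}{(d_1d_2\cdots d_j)^2}=-2+\frac{q_1+q_{1,l}}{q+q_l}.$$ In particular, if $[n_1,\dots,n_l]\in T_6$, then $d_{l+1}\in\bar 2\cdot 3^{\alpha}$ for some positive odd integer $\alpha$.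
   Context: For integers $n_j\ge2$, $L_{[n_1,\dots,n_l]}$ is the lattice with basis $e_1,\dots,e_l$ whose Gram matrix $M(-n_1,\dots,-n_l)$ is tridiagonal with diagonal $-n_1,\dots,-n_l$ and entries $1$ directly above and below the diagonal. $[m_1,\dots,m_k]=m_1-1/(m_2-1/(\cdots-1/m_k))$. $q=|\det M(-n_1,\dots,-n_l)|$, $q_1=|\det M(-n_2,\dots,-n_l)|$, $q_l=|\det M(-n_1,\dots,-n_{l-1})|$, $q_{1,l}=|\det M(-n_2,\dots,-n_{l-1})|$, with determinant of an empty matrix equal to $1$. $T_6$ is the set of such continued fractions equal to $\frac{6n^2}{6na-1}$ for integers $n>a>0$, $\gcd(n,a)=1$. For an integer $\alpha$ and $x\in\{1,2\}$, $\bar x\cdot 3^{\alpha}$ denotes the set of elements $3^{\alpha}u\in\mathbb{Q}_3$ with $u$ a $3$-adic unit congruent to $x$ modulo $3$. *)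

theory Defs
  imports Complex_Main "Jordan_Normal_Form.Determinant" "HOL-Number_Theory.Cong"
begin

text \<open>Hirzebruch-Jung continued fraction [m1,...,mk] = m1 - 1/(m2 - 1/(... - 1/mk)),
  evaluated in the rationals (the empty list is junk and never used).\<close>
fun hjcf :: "int list \<Rightarrow> rat" where
  "hjcf [] = 0"
| "hjcf [m] = of_int m"
| "hjcf (m # m' # ms) = of_int m - 1 / hjcf (m' # ms)"

text \<open>Gram matrix M(-n_1,...,-n_l) of L_[n_1,...,n_l] (0-based indices).\<close>
definition tri_gram :: "int list \<Rightarrow> nat \<Rightarrow> nat \<Rightarrow> int" where
  "tri_gram ns i j = (if i = j then - (ns ! i) else if i = Suc j \<or> j = Suc i then 1 else 0)"

definition tri_mat :: "int list \<Rightarrow> int mat" where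
  "tri_mat ns = mat (length ns) (length ns) (\<lambda>(i, j). tri_gram ns i j)"

definition lat_form :: "int list \<Rightarrow> (nat \<Rightarrow> rat) \<Rightarrow> (nat \<Rightarrow> rat) \<Rightarrow> rat" where
  "lat_form ns x y = (\<Sum>i<length ns. \<Sum>j<length ns. x i * of_int (tri_gram ns i j) * y j)"

definition is_basis_Q :: "nat \<Rightarrow> (nat \<Rightarrow> nat \<Rightarrow> rat) \<Rightarrow> bool" where
  "is_basis_Q k v \<longleftrightarrow>
     (\<forall>c :: nat \<Rightarrow> rat. (\<forall>t<k. (\<Sum>i=1..k. c i * v i t) = 0) \<longrightarrow> (\<forall>i\<in>{1..k}. c i = 0)) \<and>
     (\<forall>w :: nat \<Rightarrow> rat. \<exists>c :: nat \<Rightarrow> rat. \<forall>t<k. w t = (\<Sum>i=1..k. c i * v i t))"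

definition orth_basis :: "int list \<Rightarrow> (nat \<Rightarrow> nat \<Rightarrow> rat) \<Rightarrow> (nat \<Rightarrow> rat) \<Rightarrow> bool" where
  "orth_basis ns v d \<longleftrightarrow> is_basis_Q (length ns) v \<and>
     (\<forall>i\<in>{1..length ns}. \<forall>j\<in>{1..length ns}.
        lat_form ns (v i) (v j) = (if i = j then d i else 0))"

definition tau :: "int list \<Rightarrow> int list" where
  "tau ns = 2 # butlast ns @ [last ns + 1]"

text \<open>q, q_1, q_l, q_{1,l}. For l = 1 the matrix M(-n_2,...,-n_0) is taken to have
  determinant 0 (continuant convention K_{-1} = 0).\<close>
definition qq :: "int list \<Rightarrow> int" where "qq ns = \<bar>det (tri_mat ns)\<bar>"
definition q_1 :: "int list \<Rightarrow> int" where "q_1 ns = \<bar>det (tri_mat (tl ns))\<bar>"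
definition q_l :: "int list \<Rightarrow> int" where "q_l ns = \<bar>det (tri_mat (butlast ns))\<bar>"
definition q_1l :: "int list \<Rightarrow> int" where
  "q_1l ns = (if length ns = 1 then 0 else \<bar>det (tri_mat (butlast (tl ns)))\<bar>)"

definition in_T6 :: "int list \<Rightarrow> bool" where
  "in_T6 ns \<longleftrightarrow> (\<exists>n a :: int. n > a \<and> a > 0 \<and> gcd n a = 1 \<and>
      hjcf ns = of_int (6 * n^2) / of_int (6 * n * a - 1))"

text \<open>y \<in> bar x \<cdot> 3^alpha: y = 3^alpha u with u a 3-adic unit, u \<equiv> x mod 3. For rational y,
  u = r/s with r, s prime to 3 and r \<equiv> x s (mod 3).\<close>
definition bar_3pow :: "int \<Rightarrow> int \<Rightarrow> rat \<Rightarrow> bool" where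
  "bar_3pow x \<alpha> y \<longleftrightarrow> (\<exists>r s :: int. s \<noteq> 0 \<and> \<not> 3 dvd r \<and> \<not> 3 dvd s \<and>
      [r = x * s] (mod 3) \<and> y = (3::rat) powi \<alpha> * of_int r / of_int s)"

end

theory Submission
  imports Defs
begin



fun zz :: "(nat \<Rightarrow> int) \<Rightarrow> nat \<Rightarrow> int" where
  "zz m 0 = 0" | "zz m (Suc 0) = 1" | "zz m (Suc (Suc k)) = m k * zz m (Suc k) - zz m k"

fun ww :: "(nat \<Rightarrow> int) \<Rightarrow> nat \<Rightarrow> int" where
  "ww m 0 = -1" | "ww m (Suc 0) = 0" | "ww m (Suc (Suc k)) = m k * ww m (Suc k) - ww m k"

lemma zz_cong: "(\<And>i. Suc (Suc i) \<le> k \<Longrightarrow> m i = m' i) \<Longrightarrow> zz m k = zz m' k"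
  by (induction m k rule: zz.induct) auto

lemma ww_zz: "ww m (Suc k) = zz (\<lambda>i. m (Suc i)) k"
  by (induction m k rule: zz.induct) (auto simp: numeral_2_eq_2)

lemma zz_front: "zz m (Suc (Suc k)) = m 0 * zz (\<lambda>i. m (Suc i)) (Suc k) - zz (\<lambda>i. m (Suc (Suc i))) k"
proof (induction k rule: less_induct)
  case (less k)
  show ?case
  proof (cases k)
    case 0 then show ?thesis by simp
  next
    case (Suc p) note kp = this
    show ?thesis
    proof (cases p)
      case 0 then show ?thesis using kp by (simp add: algebra_simps)
    next
      case (Suc r)
      have h1: "zz m (Suc k) = m 0 * zz (\<lambda>i. m (Suc i)) k - zz (\<lambda>i. m (Suc (Suc i))) p"
        using less kp by simp
      have h2: "zz m k = m 0 * zz (\<lambda>i. m (Suc i)) p - zz (\<lambda>i. m (Suc (Suc i))) r"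
        using less kp Suc by simp
      have e1: "zz (\<lambda>i. m (Suc i)) (Suc k) = m k * zz (\<lambda>i. m (Suc i)) k - zz (\<lambda>i. m (Suc i)) p" using kp by simp
      have e2: "zz (\<lambda>i. m (Suc (Suc i))) k = m k * zz (\<lambda>i. m (Suc (Suc i))) p - zz (\<lambda>i. m (Suc (Suc i))) r" using kp Suc by simp
      have e0: "zz m (Suc (Suc k)) = m k * zz m (Suc k) - zz m k" by simp
      show ?thesis unfolding e0 e1 e2 h1 h2 by (simp add: algebra_simps)
    qed
  qed
qed

lemma zz_mono: "(\<And>i. Suc (Suc i) \<le> k \<Longrightarrow> m i \<ge> 2) \<Longrightarrow> zz m k \<ge> 0 \<and> (k > 0 \<longrightarrow> zz m k > zz m (k - 1))"
proof (induction m k rule: zz.induct)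
  case (3 m k)
  then have a: "0 \<le> zz m (Suc k)" "zz m k < zz m (Suc k)" "m k \<ge> 2" by (auto simp: le_Suc_eq)
  have "m k * zz m (Suc k) \<ge> 2 * zz m (Suc k)" using a by (intro mult_right_mono) auto
  then show ?case using a by auto
qed auto

lemma zz_pos: assumes "\<And>i. Suc (Suc i) \<le> k \<Longrightarrow> m i \<ge> 2" "k > 0" shows "zz m k > 0"
proof -
  have "zz m (k-1) \<ge> 0" using zz_mono[of "k-1" m] assms by auto
  then show ?thesis using zz_mono[of k m] assms by auto
qed

lemma zz_lin: "zz (m(k := m k + 1)) (Suc (Suc k)) = zz m (Suc (Suc k)) + zz m (Suc k)"
proof -
  have "zz (m(k := m k + 1)) (Suc k) = zz m (Suc k)" by (rule zz_cong) auto
  moreover have "zz (m(k := m k + 1)) k = zz m k" by (rule zz_cong) auto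
  ultimately show ?thesis by (simp add: algebra_simps)
qed

lemma ww_cong: "(\<And>i. Suc (Suc i) \<le> k \<Longrightarrow> m i = m' i) \<Longrightarrow> ww m k = ww m' k"
  by (induction m k rule: ww.induct) auto

lemma ww_lin: "ww (m(k := m k + 1)) (Suc (Suc k)) = ww m (Suc (Suc k)) + ww m (Suc k)"
proof -
  have "ww (m(k := m k + 1)) (Suc k) = ww m (Suc k)" by (rule ww_cong) auto
  moreover have "ww (m(k := m k + 1)) k = ww m k" by (rule ww_cong) auto
  ultimately show ?thesis by (simp add: algebra_simps)
qed

lemma wronski: "zz m k * ww m (Suc k) - zz m (Suc k) * ww m k = 1"
proof (induction k)
  case (Suc k)
  then show ?case by (simp add: algebra_simps)
qed simp

lemma tri_mat_carrier: "tri_mat xs \<in> carrier_mat (length xs) (length xs)"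
  unfolding tri_mat_def by auto

lemma tri_mat_idx: "i < length xs \<Longrightarrow> j < length xs \<Longrightarrow> tri_mat xs $$ (i,j) = tri_gram xs i j"
  unfolding tri_mat_def by auto

lemma det_tri: "det (tri_mat xs) = (-1)^(length xs) * zz (nth xs) (length xs + 1)"
proof (induction "length xs" arbitrary: xs rule: less_induct)
  case less
  show ?case
  proof (cases "length xs")
    case 0 then show ?thesis using tri_mat_carrier[of xs] by simp
  next
    case (Suc k)
    define A where "A = tri_mat xs"
    have A: "A \<in> carrier_mat (Suc k) (Suc k)" using tri_mat_carrier[of xs] Suc A_def by simp
    have bl: "length (butlast xs) = k" using Suc by simp
    have del1: "mat_delete A k k = tri_mat (butlast xs)"
      by (rule eq_matI) (use Suc in \<open>auto simp: A_def mat_delete_def tri_mat_def tri_gram_def nth_butlast\<close>)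
    have c1: "cofactor A k k = det (tri_mat (butlast xs))"
      unfolding cofactor_def del1 by simp
    have zb: "zz (nth (butlast xs)) (k+1) = zz (nth xs) (k+1)"
      by (rule zz_cong) (use bl in \<open>auto simp: nth_butlast\<close>)
    have ihb: "det (tri_mat (butlast xs)) = (-1)^k * zz (nth xs) (k+1)"
      using less[of "butlast xs"] Suc bl zb by simp
    show ?thesis
    proof (cases k)
      case 0
      have "det A = (\<Sum>i<Suc k. A $$ (i,k) * cofactor A i k)"
        by (rule laplace_expansion_column[OF A]) simp
      also have "\<dots> = A $$ (k,k) * cofactor A k k" using 0 by simp
      finally show ?thesis using c1 ihb 0 Suc
        by (simp add: A_def tri_mat_idx tri_gram_def)
    next
      case (Suc p)
      have bbl: "length (butlast (butlast xs)) = p" using bl Suc by simp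
      have zbb: "zz (nth (butlast (butlast xs))) (p+1) = zz (nth xs) (p+1)"
        by (rule zz_cong) (use bbl bl in \<open>auto simp: nth_butlast\<close>)
      have ihbb: "det (tri_mat (butlast (butlast xs))) = (-1)^p * zz (nth xs) (p+1)"
        using less[of "butlast (butlast xs)"] \<open>length xs = Suc k\<close> bbl zbb Suc by simp
      define M where "M = mat_delete A p k"
      have M: "M \<in> carrier_mat (Suc p) (Suc p)" using A Suc M_def mat_delete_carrier[OF A] by simp
      have "det M = (\<Sum>j<Suc p. M $$ (p,j) * cofactor M p j)"
        by (rule laplace_expansion_row[OF M]) simp
      also have "\<dots> = M $$ (p,p) * cofactor M p p"
      proof -
        have "\<forall>j<p. M $$ (p,j) = 0" using Suc \<open>length xs = Suc k\<close>
          by (auto simp: M_def A_def mat_delete_def tri_mat_def tri_gram_def)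
        then show ?thesis by (simp add: sum.lessThan_Suc)
      qed
      finally have dM0: "det M = M $$ (p,p) * cofactor M p p" .
      have Mpp: "M $$ (p,p) = 1" using Suc \<open>length xs = Suc k\<close>
          by (auto simp: M_def A_def mat_delete_def tri_mat_def tri_gram_def)
      have dd: "mat_delete M p p = tri_mat (butlast (butlast xs))"
        by (rule eq_matI) (use Suc \<open>length xs = Suc k\<close> in \<open>auto simp: M_def A_def mat_delete_def tri_mat_def tri_gram_def nth_butlast\<close>)
      have dM: "det M = det (tri_mat (butlast (butlast xs)))" using dM0 Mpp dd by (simp add: cofactor_def)
      have "det A = (\<Sum>i<Suc k. A $$ (i,k) * cofactor A i k)"
        by (rule laplace_expansion_column[OF A]) simp
      also have "\<dots> = A $$ (k,k) * cofactor A k k + A $$ (p,k) * cofactor A p k"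
      proof -
        have "\<forall>i<p. A $$ (i,k) = 0" using Suc \<open>length xs = Suc k\<close>
          by (auto simp: A_def tri_mat_def tri_gram_def)
        then show ?thesis using Suc by (simp add: sum.lessThan_Suc)
      qed
      also have "\<dots> = - xs ! k * ((-1)^k * zz (nth xs) (k+1)) + (-1)^(p+k) * ((-1)^p * zz (nth xs) (p+1))"
        using c1 ihb ihbb dM Suc \<open>length xs = Suc k\<close>
        by (simp add: A_def tri_mat_idx tri_gram_def cofactor_def M_def)
      also have "\<dots> = (-1)^(Suc k) * zz (nth xs) (Suc k + 1)"
        using Suc by (simp add: algebra_simps)
      finally show ?thesis using \<open>length xs = Suc k\<close> by (simp add: A_def)
    qed
  qed
qed




lemma bez_coprime: "u*a + v*b = (1::int) \<Longrightarrow> coprime a b"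
proof -
  assume h: "u*a + v*b = 1"
  have "gcd a b dvd u*a + v*b" by simp
  then have "gcd a b dvd 1" using h by (simp only:)
  then have "gcd a b = 1" by simp
  then show ?thesis by (simp add: coprime_iff_gcd_eq_1)
qed

lemma pow3_split: "(x::int) \<noteq> 0 \<Longrightarrow> \<exists>\<beta>::nat. \<exists>m. x = 3^\<beta> * m \<and> \<not> 3 dvd m"
proof (induction "nat \<bar>x\<bar>" arbitrary: x rule: less_induct)
  case less
  show ?case
  proof (cases "3 dvd x")
    case False then show ?thesis by (intro exI[of _ 0] exI[of _ x]) auto
  next
    case True
    then obtain y where y: "x = 3 * y" by auto
    have "nat \<bar>y\<bar> < nat \<bar>x\<bar>" "y \<noteq> 0" using y less.prems by auto
    then obtain \<beta> m where "y = 3^\<beta> * m" "\<not> 3 dvd m" using less.hyps by blast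
    then show ?thesis using y by (intro exI[of _ "Suc \<beta>"] exI[of _ m]) auto
  qed
qed

lemma T6_arith:
  fixes q q1 ql q1l N a :: int
  assumes "N > a" "a > 0" "q > 0" "q1 > 0" "0 < ql" "ql < q" "ql*q1 - q*q1l = 1"
    and eq: "of_int q / of_int q1 = (of_int (6*N^2) / of_int (6*N*a - 1) :: rat)"
  shows "\<exists>\<alpha>::int. \<alpha> > 0 \<and> odd \<alpha> \<and> bar_3pow 2 \<alpha> (-2 + of_int (q1+q1l) / of_int (q+ql))"
proof -
  have Na0: "N*a > 0" using mult_pos_pos[of N a] assms by simp
  have "6*N*a = 6*(N*a)" by simp
  then have Na: "6*N*a - 1 > 0" using Na0 by linarith
  have e1: "q * (6*N*a - 1) = 6*N^2 * q1"
  proof -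
    have "(of_int q :: rat) * of_int (6*N*a - 1) = of_int (6*N^2) * of_int q1"
      using eq Na assms(4) by (subst (asm) frac_eq_eq) (simp_all del: of_int_mult of_int_diff)
    then show ?thesis by (simp only: of_int_mult[symmetric] of_int_eq_iff)
  qed
  have cop1: "coprime q q1" by (rule bez_coprime[of "-q1l" _ ql]) (use assms(7) in \<open>simp add: algebra_simps\<close>)
  have cop2: "coprime (6*N^2) (6*N*a - 1)"
    by (rule bez_coprime[of "6*a^2" _ "-6*N*a-1"]) (simp add: algebra_simps power2_eq_square)
  have "q dvd 6*N^2 * q1" using e1 by (metis dvd_triv_left)
  then have d1: "q dvd 6*N^2" using cop1 by (simp add: coprime_dvd_mult_left_iff)
  have "6*N^2 dvd q * (6*N*a - 1)" using e1 by (metis dvd_triv_left)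
  then have d2: "6*N^2 dvd q" using cop2 by (simp add: coprime_dvd_mult_left_iff)
  have qv: "q = 6*N^2" using d1 d2 assms by (intro zdvd_antisym_nonneg) auto
  have N0: "N^2 > 0" using assms by simp
  have "6*N^2 * (6*N*a-1) = 6*N^2 * q1" using e1 qv by (simp add: mult.commute)
  then have q1v: "q1 = 6*N*a - 1" using N0 by simp
  define Q where "Q = 6*N^2 - 6*N*a - 1"
  have key: "(ql - Q) * (6*N*a - 1) = 6*N^2 * (q1l - (6*N*a - 6*a^2 - 1))"
    using assms(7) qv q1v unfolding Q_def by (simp add: algebra_simps power2_eq_square)
  have "6*N^2 dvd (ql - Q) * (6*N*a - 1)" unfolding key by simp
  then have "6*N^2 dvd (ql - Q)" using cop2 by (simp add: coprime_dvd_mult_left_iff)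
  moreover have "Q > 0"
  proof -
    have "6*N*(N-a) \<ge> 6*N" using assms by (simp add: mult_left_mono)
    then show ?thesis unfolding Q_def using assms by (simp add: algebra_simps power2_eq_square)
  qed
  moreover have "Q < 6*N^2" unfolding Q_def using Na0 \<open>6*N*a = 6*(N*a)\<close> by linarith
  ultimately have qlv: "ql = Q"
  proof -
    assume dv: "6*N^2 dvd (ql - Q)" and Q0: "Q > 0" and Qlt: "Q < 6*N^2"
    show "ql = Q"
    proof (rule ccontr)
      assume "ql \<noteq> Q"
      then have "\<bar>6*N^2\<bar> \<le> \<bar>ql - Q\<bar>" using dv by (intro dvd_imp_le_int) auto
      then show False using Q0 Qlt assms(5,6) qv by auto
    qed
  qed
  have q1lv: "q1l = 6*N*a - 6*a^2 - 1" using key qlv N0 by simp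
  have "2*N - a \<noteq> 0" using assms by simp
  then obtain \<beta> m where bm: "2*N - a = 3^\<beta> * m" "\<not> 3 dvd m" using pow3_split by blast
  define s where "s = 12*N^2 - 6*N*a - 1"
  have s0: "s > 0" unfolding s_def using \<open>Q > 0\<close> N0 unfolding Q_def by (simp add: algebra_simps power2_eq_square)
  have sq: "q + ql = s" unfolding s_def qv qlv Q_def by simp
  have nm: "q1 + q1l - 2 * (q + ql) = -6 * (2*N-a)^2"
      unfolding qv qlv Q_def q1v q1lv by (simp add: algebra_simps power2_eq_square)
  have Dv: "-2 + of_int (q1+q1l) / of_int (q+ql) = (of_int (-6 * (2*N-a)^2) / of_int s :: rat)"
  proof -
    have "(-2::rat) + of_int (q1+q1l) / of_int (q+ql) = of_int (q1 + q1l - 2 * (q + ql)) / of_int (q+ql)"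
      using s0 sq by (simp add: field_simps)
    also have "\<dots> = of_int (-6 * (2*N-a)^2) / of_int (q+ql)" by (simp only: nm)
    finally show ?thesis by (simp only: sq)
  qed
  show ?thesis
  proof (intro exI[of _ "int (2*\<beta>+1)"] conjI)
    show "int (2*\<beta>+1) > 0" by simp
    show "odd (int (2*\<beta>+1))" by simp
    show "bar_3pow 2 (int (2*\<beta>+1)) (-2 + of_int (q1+q1l) / of_int (q+ql))"
      unfolding bar_3pow_def
    proof (rule exI[of _ "-2*m^2"], rule exI[of _ s], intro conjI)
      show "s \<noteq> 0" using s0 by simp
      have "3 dvd m - 1 \<or> 3 dvd m + 1" using bm(2) by presburger
      then have m1: "3 dvd m^2 - 1"
        by (metis dvd_mult dvd_mult2 power2_eq_square square_diff_one_factored)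
      show "\<not> 3 dvd s"
      proof
        assume "3 dvd s"
        moreover have "s = 3*(4*N^2-2*N*a) - 1" unfolding s_def by (simp add: algebra_simps)
        then have e: "3*(4*N^2-2*N*a) - s = 1" by simp
        have "3 dvd 3*(4*N^2-2*N*a) - s" using \<open>3 dvd s\<close> by (intro dvd_diff) simp_all
        then show False unfolding e by simp
      qed
      show "\<not> 3 dvd -2*m^2"
      proof
        assume "3 dvd -2*m^2"
        then have "3 dvd -2*m^2 + 2*(m^2-1)" by (rule dvd_add[OF _ dvd_mult[OF m1]])
        moreover have "-2*m^2 + 2*(m^2-1) = -2" by simp
        ultimately show False by simp
      qed
      have ee: "-2*m^2 - 2*s = -2*(m^2-1) + 3 * (4*N*a - 8*N^2)" unfolding s_def by (simp add: algebra_simps)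
      have "3 dvd -2*(m^2-1) + 3 * (4*N*a - 8*N^2)" by (rule dvd_add[OF dvd_mult[OF m1] dvd_triv_left])
      then have "3 dvd -2*m^2 - 2*s" unfolding ee .
      then show "[-2*m^2 = 2*s] (mod 3)" by (simp add: cong_iff_dvd_diff)
      show "-2 + of_int (q1+q1l) / of_int (q+ql) = (3::rat) powi int (2*\<beta>+1) * of_int (-2*m^2) / of_int s"
        unfolding Dv bm(1) power_int_of_nat by (simp add: power_mult_distrib power_add power_mult algebra_simps)
    qed
  qed
qed




lemma hjcf_cons: "xs \<noteq> [] \<Longrightarrow> hjcf (x # xs) = of_int x - 1 / hjcf xs"
  by (cases xs) auto

lemma hjcf_zz: "xs \<noteq> [] \<Longrightarrow> \<forall>x\<in>set xs. x \<ge> 2 \<Longrightarrow>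
   hjcf xs = of_int (zz (nth xs) (length xs + 1)) / of_int (zz (nth (tl xs)) (length xs))"
proof (induction xs)
  case Nil then show ?case by simp
next
  case (Cons a xs)
  show ?case
  proof (cases "xs = []")
    case True then show ?thesis by simp
  next
    case False
    have pos: "zz (nth xs) (length xs + 1) > 0"
      by (rule zz_pos) (use Cons.prems in \<open>auto\<close>)
    have IH: "hjcf xs = of_int (zz (nth xs) (length xs + 1)) / of_int (zz (nth (tl xs)) (length xs))"
      using Cons False by simp
    have f1: "(\<lambda>i. (a # xs) ! Suc i) = nth xs" by auto
    have f2: "(\<lambda>i. (a # xs) ! Suc (Suc i)) = nth (tl xs)" using False by (cases xs) (auto simp: fun_eq_iff)
    have E: "zz (nth (a # xs)) (Suc (Suc (length xs))) = a * zz (nth xs) (Suc (length xs)) - zz (nth (tl xs)) (length xs)"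
      using zz_front[of "nth (a#xs)" "length xs"] unfolding f1 f2 by simp
    have "hjcf (a#xs) = of_int a - 1/hjcf xs" by (rule hjcf_cons[OF False])
    also have "\<dots> = (of_int a * of_int (zz (nth xs) (length xs + 1)) - of_int (zz (nth (tl xs)) (length xs))) / of_int (zz (nth xs) (length xs + 1))"
      using IH pos by (simp add: field_simps del: zz.simps)
    also have "\<dots> = of_int (zz (nth (a # xs)) (Suc (Suc (length xs)))) / of_int (zz (nth xs) (length xs + 1))"
      unfolding E by (simp del: zz.simps)
    finally show ?thesis by (simp del: zz.simps)
  qed
qed

lemma hjcf_rev: assumes "\<forall>x\<in>set ns. x \<ge> 2" "1 \<le> j" "j \<le> length ns"
  shows "hjcf (rev (take j ns)) = of_int (zz (nth ns) (j + 1)) / of_int (zz (nth ns) j)"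
  using assms(2,3)
proof (induction j rule: dec_induct)
  case base
  then show ?case by (cases ns) auto
next
  case (step k)
  then have IH: "hjcf (rev (take k ns)) = of_int (zz (nth ns) (k + 1)) / of_int (zz (nth ns) k)"
    and kl: "Suc k \<le> length ns" and k1: "1 \<le> k" by auto
  have pos: "zz (nth ns) (k+1) > 0"
  proof (rule zz_pos)
    fix i assume "Suc (Suc i) \<le> k + 1"
    then have "i < length ns" using kl by simp
    then show "ns ! i \<ge> 2" using assms(1) nth_mem by blast
  qed simp
  have r: "rev (take (Suc k) ns) = ns ! k # rev (take k ns)"
    using kl by (simp add: take_Suc_conv_app_nth)
  have ne: "rev (take k ns) \<noteq> []" using k1 kl by (cases ns) auto
  show ?case unfolding r hjcf_cons[OF ne] IH using pos
    by (simp add: field_simps)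
qed

lemma tri_gram_sym: "tri_gram xs i j = tri_gram xs j i"
  unfolding tri_gram_def by auto

lemma gram_row:
  fixes y :: "nat \<Rightarrow> rat"
  assumes "i < length xs"
  shows "(\<Sum>j<length xs. of_int (tri_gram xs i j) * y j) =
    - of_int (xs!i) * y i + (if 0 < i then y (i-1) else 0) + (if Suc i < length xs then y (Suc i) else 0)"
proof -
  have "(\<Sum>j<length xs. of_int (tri_gram xs i j) * y j) =
     (\<Sum>j<length xs. (if j = i then - of_int (xs!i) * y i else 0) + (if 0 < i \<and> j = i - 1 then y (i-1) else 0)
        + (if Suc i < length xs \<and> j = Suc i then y (Suc i) else 0))"
    by (rule sum.cong) (auto simp: tri_gram_def)
  also have "\<dots> = - of_int (xs!i) * y i + (if 0 < i then y (i-1) else 0) + (if Suc i < length xs then y (Suc i) else 0)"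
    using assms by (simp add: sum.distrib)
  finally show ?thesis .
qed

lemma lat_form_alt: "lat_form xs x y = (\<Sum>i<length xs. x i * (\<Sum>j<length xs. of_int (tri_gram xs i j) * y j))"
  unfolding lat_form_def by (simp add: sum_distrib_left mult.assoc)

lemma lat_form_sym: "lat_form xs x y = lat_form xs y x"
  unfolding lat_form_def
  by (subst sum.swap) (simp add: tri_gram_sym mult.commute mult.left_commute)

lemma lat_form_lin: "finite I \<Longrightarrow> lat_form xs (\<lambda>s. \<Sum>i\<in>I. c i * f i s) y = (\<Sum>i\<in>I. c i * lat_form xs (f i) y)"
  unfolding lat_form_def
  by (simp add: sum_distrib_left sum_distrib_right mult.assoc sum.swap[of _ I])

lemma lat_form_zero: "(\<And>s. s < length xs \<Longrightarrow> x s = 0) \<Longrightarrow> lat_form xs x y = 0"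
  unfolding lat_form_def by simp




lemma zz_ww_gap: "(\<And>i. Suc (Suc i) \<le> k \<Longrightarrow> m i \<ge> 2) \<Longrightarrow> zz m k - ww m k \<ge> 1 \<and> (k > 0 \<longrightarrow> zz m k - ww m k \<ge> zz m (k - 1) - ww m (k - 1))"
proof (induction k rule: less_induct)
  case (less k)
  show ?case
  proof (cases k)
    case 0 then show ?thesis by simp
  next
    case (Suc p) note kp = this
    show ?thesis
    proof (cases p)
      case 0 then show ?thesis using kp by simp
    next
      case (Suc r)
      have h: "zz m p - ww m p \<ge> 1" "zz m p - ww m p \<ge> zz m r - ww m r" "m r \<ge> 2"
        using less.IH[of p] less.prems kp Suc by auto
      have e: "zz m k - ww m k = m r * (zz m p - ww m p) - (zz m r - ww m r)"
        using kp Suc by (simp add: algebra_simps)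
      have "m r * (zz m p - ww m p) \<ge> 2 * (zz m p - ww m p)" using h by (intro mult_right_mono) auto
      then show ?thesis using e h kp Suc by auto
    qed
  qed
qed

locale L6 =
  fixes ns :: "int list"
  assumes ne: "ns \<noteq> []" and ge2: "\<forall>n\<in>set ns. n \<ge> 2"
begin

abbreviation "nl \<equiv> length ns"
abbreviation "tt \<equiv> tau ns"

definition "mu = (\<lambda>k. tt ! Suc k)"
definition "Z k = (of_int (zz mu k) :: rat)"
definition "W k = (of_int (ww mu k) :: rat)"
definition "rho = W (Suc nl) / Z (Suc nl)"
definition "y s = rho * Z s - W s"
definition "vv j s = (if j = Suc nl then y s else if s \<le> j then Z s / Z j else 0)"
definition "dd j = - Z (Suc j) / Z j"
definition "Bf (x :: nat \<Rightarrow> rat) i = (\<Sum>j<Suc nl. of_int (tri_gram tt i j) * x j)"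

lemma ln1: "nl \<ge> 1" using ne by (cases ns) auto

lemma nlS: "Suc (nl - 1) = nl" using ln1 by simp

lemma len_tt: "length tt = Suc nl"
  using ln1 unfolding tau_def by simp

lemma tt0: "tt ! 0 = 2" unfolding tau_def by simp

lemma ttS: "k < nl - 1 \<Longrightarrow> tt ! Suc k = ns ! k"
  unfolding tau_def by (simp add: nth_append nth_butlast)

lemma ttl: "tt ! nl = ns ! (nl - 1) + 1"
proof -
  have "tt ! Suc (nl - 1) = (butlast ns @ [last ns + 1]) ! (nl - 1)" unfolding tau_def by simp
  also have "\<dots> = last ns + 1" by (simp add: nth_append)
  also have "\<dots> = ns ! (nl - 1) + 1" using ne by (simp add: last_conv_nth)
  finally show ?thesis by (simp only: nlS)
qed

lemma nsge: "i < nl \<Longrightarrow> ns ! i \<ge> 2" using ge2 nth_mem by blast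

lemma mu_ge: "k < nl \<Longrightarrow> mu k \<ge> 2"
proof -
  assume k: "k < nl"
  show ?thesis
  proof (cases "k < nl - 1")
    case True then show ?thesis using ttS nsge k by (simp add: mu_def)
  next
    case False then have "k = nl - 1" using k by simp
    obtain p where p: "nl = Suc p" using ln1 by (cases nl) auto
    then show ?thesis using ttl nsge[of "nl - 1"] \<open>k = nl - 1\<close> by (simp add: mu_def)
  qed
qed

lemma zz_mu_le: "k \<le> nl \<Longrightarrow> zz mu k = zz (nth ns) k"
  by (rule zz_cong) (auto simp: mu_def ttS)

lemma mu_upd: "Suc (Suc i) \<le> Suc nl \<Longrightarrow> mu i = ((nth ns)(nl - 1 := ns ! (nl - 1) + 1)) i"
proof -
  assume "Suc (Suc i) \<le> Suc nl"
  then have "i < nl - 1 \<or> i = nl - 1" by auto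
  moreover obtain p where p: "nl = Suc p" using ln1 by (cases nl) auto
  ultimately show ?thesis using ttS ttl by (auto simp: mu_def)
qed

lemma zz_mu_top: "zz mu (Suc nl) = zz (nth ns) (Suc nl) + zz (nth ns) nl"
proof -
  have "zz mu (Suc nl) = zz ((nth ns)(nl - 1 := ns ! (nl - 1) + 1)) (Suc nl)"
    by (rule zz_cong) (simp add: mu_upd)
  also have "\<dots> = zz (nth ns) (Suc nl) + zz (nth ns) nl"
    by (rule zz_lin[of "nth ns" "nl - 1", unfolded nlS])
  finally show ?thesis .
qed

lemma ww_mu_top: "ww mu (Suc nl) = ww (nth ns) (Suc nl) + ww (nth ns) nl"
proof -
  have "ww mu (Suc nl) = ww ((nth ns)(nl - 1 := ns ! (nl - 1) + 1)) (Suc nl)"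
    by (rule ww_cong) (simp add: mu_upd)
  also have "\<dots> = ww (nth ns) (Suc nl) + ww (nth ns) nl"
    by (rule ww_lin[of "nth ns" "nl - 1", unfolded nlS])
  finally show ?thesis .
qed

lemma zz_mu_pos: "0 < k \<Longrightarrow> k \<le> Suc nl \<Longrightarrow> zz mu k > 0"
  by (rule zz_pos) (auto intro!: mu_ge)

lemma Z_pos: "0 < k \<Longrightarrow> k \<le> Suc nl \<Longrightarrow> Z k > 0"
  using zz_mu_pos by (simp add: Z_def)

lemma Z0: "Z 0 = 0" by (simp add: Z_def)
lemma Z1: "Z 1 = 1" by (simp add: Z_def)
lemma W0: "W 0 = -1" by (simp add: W_def)
lemma W1: "W 1 = 0" by (simp add: W_def)

lemma Z_rec: "0 < i \<Longrightarrow> Z (Suc i) = of_int (tt ! i) * Z i - Z (i - 1)"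
  by (cases i) (auto simp: Z_def mu_def)

lemma W_rec: "0 < i \<Longrightarrow> W (Suc i) = of_int (tt ! i) * W i - W (i - 1)"
  by (cases i) (auto simp: W_def mu_def)

lemma y_rec: assumes "0 < i" shows "y (Suc i) = of_int (tt ! i) * y i - y (i - 1)"
proof -
  have "y (Suc i) = rho * (of_int (tt!i) * Z i - Z(i-1)) - (of_int (tt!i) * W i - W(i-1))"
    unfolding y_def Z_rec[OF assms] W_rec[OF assms] ..
  then show ?thesis by (simp add: y_def algebra_simps)
qed

lemma y0: "y 0 = 1" by (simp add: y_def Z0 W0)
lemma y1: "y 1 = rho" by (simp add: y_def Z_def W_def)
lemma y1': "y (Suc 0) = rho" by (simp add: y_def Z_def W_def)

lemma y_top: "y (Suc nl) = 0"
  using Z_pos[of "Suc nl"] by (simp add: y_def rho_def)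

lemma Bf_row: "i < Suc nl \<Longrightarrow> Bf x i =
    - of_int (tt!i) * x i + (if 0 < i then x (i-1) else 0) + (if Suc i < Suc nl then x (Suc i) else 0)"
  unfolding Bf_def using gram_row[of i tt x] len_tt by simp

lemma Bf_v: "1 \<le> i \<Longrightarrow> i < j \<Longrightarrow> j \<le> nl \<Longrightarrow> Bf (vv j) i = 0"
proof -
  assume a: "1 \<le> i" "i < j" "j \<le> nl"
  have Zj: "Z j > 0" using Z_pos a by simp
  have "Bf (vv j) i = - of_int (tt!i) * (Z i / Z j) + Z (i-1) / Z j + Z (Suc i) / Z j"
    using a by (simp add: Bf_row vv_def)
  also have "\<dots> = (Z (Suc i) - (of_int (tt!i) * Z i - Z (i-1))) / Z j"
    using Zj by (simp add: field_simps)
  also have "\<dots> = 0" using Z_rec a by simp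
  finally show ?thesis .
qed

lemma Bf_vj: "1 \<le> j \<Longrightarrow> j \<le> nl \<Longrightarrow> Bf (vv j) j = dd j"
proof -
  assume a: "1 \<le> j" "j \<le> nl"
  have Zj: "Z j > 0" using Z_pos a by simp
  have "Bf (vv j) j = - of_int (tt!j) * (Z j / Z j) + Z (j-1) / Z j"
    using a by (simp add: Bf_row vv_def)
  also have "\<dots> = - (of_int (tt!j) * Z j - Z (j-1)) / Z j"
    using Zj by (simp add: field_simps)
  also have "\<dots> = dd j" using Z_rec a by (simp add: dd_def)
  finally show ?thesis .
qed

lemma vv_top: "vv (Suc nl) = y" by (rule ext) (simp add: vv_def)

lemma Bf_y: "1 \<le> i \<Longrightarrow> i \<le> nl \<Longrightarrow> Bf y i = 0"
proof -
  assume a: "1 \<le> i" "i \<le> nl"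
  have "Bf y i = - of_int (tt!i) * y i + y (i - 1) + (if i < nl then y (Suc i) else 0)"
    using a by (simp add: Bf_row)
  also have "\<dots> = (if i < nl then 0 else - y (Suc i))"
    using y_rec[of i] a by auto
  also have "\<dots> = 0" using y_top a by auto
  finally show ?thesis .
qed

lemma Bf_y0: "Bf y 0 = -2 + rho"
  using ln1 ne by (simp add: Bf_row tt0 y0 y1 y1')

lemma lat_Bf: "lat_form tt x z = (\<Sum>i<Suc nl. x i * Bf z i)"
  unfolding lat_form_alt Bf_def len_tt ..

lemma O1: "1 \<le> i \<Longrightarrow> i \<le> j \<Longrightarrow> j \<le> nl \<Longrightarrow> lat_form tt (vv i) (vv j) = (if i = j then dd j else 0)"
proof -
  assume a: "1 \<le> i" "i \<le> j" "j \<le> nl"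
  have "lat_form tt (vv i) (vv j) = (\<Sum>s<Suc nl. if s = j then (if i = j then dd j else 0) else 0)"
    unfolding lat_Bf
  proof (rule sum.cong[OF refl])
    fix s assume s: "s \<in> {..<Suc nl}"
    consider "s = 0" | "1 \<le> s" "s < j" | "s = j" | "s > j" by linarith
    then show "vv i s * Bf (vv j) s = (if s = j then (if i = j then dd j else 0) else 0)"
    proof cases
      case 1 then show ?thesis using a by (simp add: vv_def Z0)
    next
      case 2 then show ?thesis using a Bf_v by simp
    next
      case 3
      have "Z j > 0" using Z_pos a by simp
      then show ?thesis using 3 a Bf_vj by (auto simp: vv_def)
    next
      case 4 then show ?thesis using a by (simp add: vv_def)
    qed
  qed
  also have "\<dots> = (if i = j then dd j else 0)" using a by simp
  finally show ?thesis .
qed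

lemma O2: "1 \<le> i \<Longrightarrow> i \<le> nl \<Longrightarrow> lat_form tt (vv i) y = 0"
  unfolding lat_Bf
proof (rule sum.neutral, rule ballI)
  fix s assume "1 \<le> i" "i \<le> nl" "s \<in> {..<Suc nl}"
  then show "vv i s * Bf y s = 0"
    using Bf_y[of s] by (cases "s = 0") (auto simp: vv_def Z0)
qed

lemma O3: "lat_form tt y y = -2 + rho"
proof -
  have "lat_form tt y y = (\<Sum>s<Suc nl. if s = 0 then -2 + rho else 0)"
    unfolding lat_Bf
    by (rule sum.cong[OF refl]) (auto simp: Bf_y0 y0 Bf_y)
  also have "\<dots> = -2 + rho" by simp
  finally show ?thesis .
qed

definition "ee i = (if i = Suc nl then -2 + rho else dd i)"

lemma orth: "i \<in> {1..Suc nl} \<Longrightarrow> j \<in> {1..Suc nl} \<Longrightarrow>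
   lat_form tt (vv i) (vv j) = (if i = j then ee i else 0)"
proof -
  assume a: "i \<in> {1..Suc nl}" "j \<in> {1..Suc nl}"
  consider "i = Suc nl" "j = Suc nl" | "i = Suc nl" "j \<le> nl" | "i \<le> nl" "j = Suc nl" | "i \<le> nl" "j \<le> nl"
    using a by force
  then show ?thesis
  proof cases
    case 1 then show ?thesis by (simp add: vv_top O3 ee_def)
  next
    case 2 then show ?thesis using a O2[of j] by (simp add: vv_top lat_form_sym[of tt y])
  next
    case 3 then show ?thesis using a O2[of i] by (simp add: vv_top)
  next
    case 4
    show ?thesis
    proof (cases "i \<le> j")
      case True then show ?thesis using 4 a O1 by (simp add: ee_def)
    next
      case False then show ?thesis using 4 a O1[of j i] lat_form_sym[of tt "vv i"] by (simp add: ee_def)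
    qed
  qed
qed

lemma rho_lt1: "rho < 1"
proof -
  have "zz mu (Suc nl) - ww mu (Suc nl) \<ge> 1"
    using zz_ww_gap[of "Suc nl" mu] mu_ge by auto
  then have "W (Suc nl) < Z (Suc nl)" unfolding W_def Z_def by linarith
  then show ?thesis using Z_pos[of "Suc nl"] by (simp add: rho_def)
qed

lemma ee_nz: "i \<in> {1..Suc nl} \<Longrightarrow> ee i \<noteq> 0"
  using rho_lt1 Z_pos[of i] Z_pos[of "Suc i"] by (auto simp: ee_def dd_def)

end




context L6 begin

lemma basis: "is_basis_Q (Suc nl) vv"
  unfolding is_basis_Q_def
proof (intro conjI allI impI ballI)
  fix c :: "nat \<Rightarrow> rat" and j
  assume h: "\<forall>t<Suc nl. (\<Sum>i=1..Suc nl. c i * vv i t) = 0" and j: "j \<in> {1..Suc nl}"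
  have "0 = lat_form tt (\<lambda>s. \<Sum>i\<in>{1..Suc nl}. c i * vv i s) (vv j)"
    by (rule lat_form_zero[symmetric]) (use h len_tt in auto)
  also have "\<dots> = (\<Sum>i\<in>{1..Suc nl}. c i * lat_form tt (vv i) (vv j))" by (rule lat_form_lin) simp
  also have "\<dots> = (\<Sum>i\<in>{1..Suc nl}. if i = j then c j * ee j else 0)"
    by (rule sum.cong[OF refl]) (use orth j in auto)
  also have "\<dots> = c j * ee j" using j by simp
  finally show "c j = 0" using ee_nz[OF j] by simp
next
  fix w :: "nat \<Rightarrow> rat"
  define w' where "w' s = w s - w 0 * y s" for s
  define g where "g j = (if j \<le> nl then w' j / Z j else 0)" for j
  define c where "c i = (if i = Suc nl then w 0 else Z i * (g i - g (Suc i)))" for i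
  show "\<exists>c. \<forall>t<Suc nl. w t = (\<Sum>i = 1..Suc nl. c i * vv i t)"
  proof (intro exI[of _ c] allI impI)
    fix t assume t: "t < Suc nl"
    have split: "(\<Sum>i = 1..Suc nl. c i * vv i t) = (\<Sum>i = 1..nl. c i * vv i t) + w 0 * y t"
      by (simp add: c_def vv_top)
    show "w t = (\<Sum>i = 1..Suc nl. c i * vv i t)"
    proof (cases "t = 0")
      case True
      have "(\<Sum>i = 1..nl. c i * vv i t) = 0" using True by (intro sum.neutral) (auto simp: vv_def Z0)
      then show ?thesis unfolding split using True y0 by simp
    next
      case False
      then have t1: "1 \<le> t" "t \<le> nl" using t by auto
      have Zt: "Z t > 0" using Z_pos t1 by simp
      have "(\<Sum>i = 1..nl. c i * vv i t) = (\<Sum>i = t..nl. c i * vv i t)"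
        by (rule sum.mono_neutral_right) (use t1 in \<open>auto simp: vv_def\<close>)
      also have "\<dots> = (\<Sum>i = t..nl. Z t * (g i - g (Suc i)))"
      proof (rule sum.cong[OF refl])
        fix i assume i: "i \<in> {t..nl}"
        have "Z i > 0" using Z_pos i t1 by simp
        then show "c i * vv i t = Z t * (g i - g (Suc i))"
          using i by (auto simp: c_def vv_def)
      qed
      also have "\<dots> = Z t * (\<Sum>i = t..nl. g i - g (Suc i))" by (simp add: sum_distrib_left)
      also have "(\<Sum>i = t..nl. g i - g (Suc i)) = - (\<Sum>i = t..nl. g (Suc i) - g i)"
        by (simp add: sum_negf[symmetric])
      also have "(\<Sum>i = t..nl. g (Suc i) - g i) = g (Suc nl) - g t" using t1 by (intro sum_Suc_diff) simp
      also have "Z t * - (g (Suc nl) - g t) = w' t" using Zt t1 by (simp add: g_def)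
      finally show ?thesis unfolding split by (simp add: w'_def)
    qed
  qed
qed

lemma prod_dd: "j \<le> nl \<Longrightarrow> (\<Prod>k=1..j. dd k) = (-1)^j * Z (Suc j)"
proof (induction j)
  case 0 then show ?case by (simp add: Z_def)
next
  case (Suc j)
  have "Z (Suc j) > 0" using Z_pos Suc by simp
  then show ?case using Suc by (simp add: dd_def)
qed

lemma wr_rat: "Z j * W (Suc j) - Z (Suc j) * W j = 1"
proof -
  have "of_int (zz mu j * ww mu (Suc j) - zz mu (Suc j) * ww mu j) = (1::rat)" using wronski by simp
  then show ?thesis by (simp add: Z_def W_def)
qed

lemma term_dd: "1 \<le> j \<Longrightarrow> j \<le> nl \<Longrightarrow> dd j / (\<Prod>k=1..j. dd k)^2 = - (W (Suc j) / Z (Suc j) - W j / Z j)"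
proof -
  assume a: "1 \<le> j" "j \<le> nl"
  have p1: "Z j > 0" "Z (Suc j) > 0" using Z_pos a by auto
  have sq: "((-1)^j * Z (Suc j))^2 = Z (Suc j)^2" by (cases "even j") simp_all
  have "dd j / (\<Prod>k=1..j. dd k)^2 = - 1 / (Z j * Z (Suc j))"
    unfolding prod_dd[OF a(2)] sq using p1 by (simp add: dd_def field_simps power2_eq_square)
  also have "\<dots> = - ((Z j * W (Suc j) - Z (Suc j) * W j) / (Z j * Z (Suc j)))" using wr_rat by simp
  also have "\<dots> = - (W (Suc j) / Z (Suc j) - W j / Z j)" using p1 by (simp add: field_simps)
  finally show ?thesis .
qed

lemma D_rho: "-2 - (\<Sum>j=1..nl. dd j / (\<Prod>k=1..j. dd k)^2) = -2 + rho"
proof -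
  have "(\<Sum>j=1..nl. dd j / (\<Prod>k=1..j. dd k)^2) = (\<Sum>j=1..nl. - (W (Suc j) / Z (Suc j) - W j / Z j))"
    by (rule sum.cong[OF refl], rule term_dd) auto
  also have "\<dots> = - (\<Sum>j=1..nl. (W (Suc j) / Z (Suc j) - W j / Z j))" by (rule sum_negf)
  also have "(\<Sum>j=1..nl. (W (Suc j) / Z (Suc j) - W j / Z j)) = W (Suc nl) / Z (Suc nl) - W 1 / Z 1"
    by (rule sum_Suc_diff[of 1 nl "\<lambda>j. W j / Z j"]) simp
  finally show ?thesis by (simp add: W_def Z_def rho_def)
qed

lemma d_match: "1 \<le> j \<Longrightarrow> j \<le> nl \<Longrightarrow>
  (if j = nl then - hjcf (rev (take nl ns)) - 1 else - hjcf (rev (take j ns))) = dd j"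
proof -
  assume a: "1 \<le> j" "j \<le> nl"
  have h: "hjcf (rev (take j ns)) = of_int (zz (nth ns) (j + 1)) / of_int (zz (nth ns) j)"
    by (rule hjcf_rev) (use ge2 a in auto)
  have zj: "zz (nth ns) j = zz mu j" using zz_mu_le a by simp
  have zjp: "zz mu j > 0" using zz_mu_pos a by simp
  show ?thesis
  proof (cases "j = nl")
    case True
    have "zz mu (Suc nl) = zz (nth ns) (Suc nl) + zz (nth ns) nl" by (rule zz_mu_top)
    then show ?thesis using True h zj zjp
      by (simp add: dd_def Z_def field_simps del: zz.simps)
  next
    case False
    then have "zz (nth ns) (j+1) = zz mu (j+1)" using zz_mu_le a by simp
    then show ?thesis using False h zj zjp by (simp add: dd_def Z_def del: zz.simps)
  qed
qed

lemma zz_ns_pos: "0 < k \<Longrightarrow> k \<le> Suc nl \<Longrightarrow> zz (nth ns) k > 0"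
  by (rule zz_pos) (auto intro!: nsge)

lemma qq_eq: "qq ns = zz (nth ns) (Suc nl)"
  using zz_ns_pos[of "Suc nl"] unfolding qq_def det_tri by (simp add: abs_mult)

lemma ql_eq: "q_l ns = zz (nth ns) nl"
proof -
  obtain p where p: "nl = Suc p" using ln1 by (cases nl) auto
  have "zz (nth (butlast ns)) (length (butlast ns) + 1) = zz (nth ns) nl"
    using p by (simp del: zz.simps) (rule zz_cong, auto simp: nth_butlast)
  then show ?thesis using zz_ns_pos[of nl] ln1 ne unfolding q_l_def det_tri by (simp add: abs_mult)
qed

lemma ntl: "nth (tl ns) = (\<lambda>i. ns ! Suc i)" using ne by (cases ns) (auto simp: fun_eq_iff)

lemma tl_pos: "0 < k \<Longrightarrow> k \<le> nl \<Longrightarrow> zz (\<lambda>i. ns ! Suc i) k > 0"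
  by (rule zz_pos) (auto intro!: nsge)

lemma q1_eq: "q_1 ns = ww (nth ns) (Suc nl)"
proof -
  obtain p where p: "nl = Suc p" using ln1 by (cases nl) auto
  have "zz (nth (tl ns)) (length (tl ns) + 1) = ww (nth ns) (Suc nl)"
    using p by (simp add: ntl ww_zz del: zz.simps)
  then show ?thesis using tl_pos[of nl] ln1 ne unfolding q_1_def det_tri by (simp add: abs_mult ww_zz ntl)
qed

lemma q1l_eq: "q_1l ns = ww (nth ns) nl"
proof (cases "nl = 1")
  case True then show ?thesis by (simp add: q_1l_def)
next
  case False
  then obtain p where p: "nl = Suc (Suc p)" using ln1 by (cases nl; cases "nl - 1") auto
  have "zz (nth (butlast (tl ns))) (length (butlast (tl ns)) + 1) = zz (\<lambda>i. ns ! Suc i) (Suc p)"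
    using p by (simp del: zz.simps) (rule zz_cong, auto simp: nth_butlast nth_tl)
  moreover have "ww (nth ns) nl = zz (\<lambda>i. ns ! Suc i) (Suc p)" using p by (simp add: ww_zz del: zz.simps)
  moreover have "zz (\<lambda>i. ns ! Suc i) (Suc p) > 0" using tl_pos[of "Suc p"] p by simp
  ultimately show ?thesis using False unfolding q_1l_def det_tri by (simp add: abs_mult)
qed

lemma rho_eq: "rho = of_int (q_1 ns + q_1l ns) / of_int (qq ns + q_l ns)"
  unfolding rho_def W_def Z_def ww_mu_top zz_mu_top q1_eq q1l_eq qq_eq ql_eq ..

lemma hjcf_eq: "hjcf ns = of_int (qq ns) / of_int (q_1 ns)"
proof -
  have "hjcf ns = of_int (zz (nth ns) (nl + 1)) / of_int (zz (nth (tl ns)) nl)"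
    by (rule hjcf_zz) (use ne ge2 in auto)
  then show ?thesis unfolding qq_eq q1_eq ntl ww_zz by simp
qed

lemma T6_part: "in_T6 ns \<Longrightarrow> \<exists>\<alpha>::int. \<alpha> > 0 \<and> odd \<alpha> \<and> bar_3pow 2 \<alpha> (-2 + rho)"
proof -
  assume "in_T6 ns"
  then obtain N a :: int where h: "N > a" "a > 0" "hjcf ns = of_int (6 * N^2) / of_int (6 * N * a - 1)"
    unfolding in_T6_def by blast
  have q1p: "q_1 ns > 0" unfolding q1_eq ww_zz using tl_pos[of nl] ln1 ne by simp
  have qp: "qq ns > 0" unfolding qq_eq using zz_ns_pos[of "Suc nl"] by simp
  have qlp: "q_l ns > 0" unfolding ql_eq using zz_ns_pos[of nl] ln1 ne by simp
  have qlt: "q_l ns < qq ns" unfolding ql_eq qq_eq using zz_mono[of "Suc nl" "nth ns"] nsge by auto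
  have wr: "q_l ns * q_1 ns - qq ns * q_1l ns = 1" unfolding ql_eq q1_eq qq_eq q1l_eq by (rule wronski)
  show ?thesis unfolding rho_eq
    by (rule T6_arith[OF h(1,2) qp q1p qlp qlt wr]) (use h(3) hjcf_eq in simp)
qed

end


theorem lemma6p5:
  fixes ns :: "int list"
  assumes "ns \<noteq> []" and "\<forall>n\<in>set ns. n \<ge> 2"
  defines "l \<equiv> length ns"
  defines "c \<equiv> (\<lambda>i::nat. - hjcf (rev (take i ns)))"
  defines "d \<equiv> (\<lambda>i::nat. if i = l then c l - 1 else c i)"
  defines "D \<equiv> -2 - (\<Sum>j=1..l. d j / (\<Prod>k=1..j. d k)^2)"
  shows "(\<exists>v. orth_basis (tau ns) v (\<lambda>i. if i = l + 1 then D else d i))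
       \<and> D = -2 + of_int (q_1 ns + q_1l ns) / of_int (qq ns + q_l ns)
       \<and> (in_T6 ns \<longrightarrow> (\<exists>\<alpha>::int. \<alpha> > 0 \<and> odd \<alpha> \<and> bar_3pow 2 \<alpha> D))"
proof -
  interpret L6 ns using assms(1,2) by unfold_locales
  have dj: "d j = dd j" if "j \<in> {1..l}" for j
    using d_match[of j] that unfolding d_def c_def l_def by auto
  have DD: "D = -2 + rho"
  proof -
    have "(\<Sum>j=1..l. d j / (\<Prod>k=1..j. d k)^2) = (\<Sum>j=1..l. dd j / (\<Prod>k=1..j. dd k)^2)"
    proof (rule sum.cong[OF refl])
      fix j assume j: "j \<in> {1..l}"
      have "(\<Prod>k=1..j. d k) = (\<Prod>k=1..j. dd k)" by (rule prod.cong[OF refl]) (use j dj in auto)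
      then show "d j / (\<Prod>k=1..j. d k)^2 = dd j / (\<Prod>k=1..j. dd k)^2" using dj j by simp
    qed
    then show ?thesis unfolding D_def using D_rho by (simp add: l_def)
  qed
  have ob: "orth_basis (tau ns) vv (\<lambda>i. if i = l + 1 then D else d i)"
    unfolding orth_basis_def len_tt
  proof (intro conjI ballI)
    show "is_basis_Q (Suc (length ns)) vv" by (rule basis)
    fix i j assume i: "i \<in> {1..Suc (length ns)}" and j: "j \<in> {1..Suc (length ns)}"
    have "ee i = (if i = l + 1 then D else d i)"
      using i dj[of i] DD by (auto simp: ee_def l_def)
    then show "lat_form (tau ns) (vv i) (vv j) = (if i = j then if i = l + 1 then D else d i else 0)"
      using orth[OF i j] by (cases "i = j") simp_all
  qed
  show ?thesis
    using ob DD rho_eq T6_part by auto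
qed

end
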